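(* Let $M\in\mathbb R^{N\times N}$ be symmetric positive definite and $\eta>0$. Let $\{a_k\}_{k\ge1}$ be a nonnegative sequence and $\{z_k\}_{k\ge0}$ a sequence in $\mathbb R^N$ with $z_1=z_0$. Fix $z^*\in\mathbb R^N$ and define $w_k=\eta(z_k-z^* )+a_k(z_k-z_{k-1})$ for $k\ge1$. Assume $W:=\sup_{k\ge1}\|w_k\|_M<+\infty$. Then for all $k\ge1$, $\|z_k-z^*\|_M\le W/\eta$ and $a_k\|z_k-z_{k-1}\|_M\le 2W$.
   Context: $\|z\|_M^2:=\langle Mz,z\rangle$. *)

theory Defs
  imports "HOL-Analysis.Analysis"
begin

definition sym_pos_def_mat :: "real ^'n ^'n \<Rightarrow> bool" where
  "sym_pos_def_mat M \<longleftrightarrow> transpose M = M \<and> (\<forall>x. x \<noteq> 0 \<longrightarrow> (M *v x) \<bullet> x > 0)"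

definition normM :: "real ^'n ^'n \<Rightarrow> real ^'n \<Rightarrow> real" where
  "normM M z = sqrt ((M *v z) \<bullet> z)"

end

theory Submission
  imports Defs
begin

lemma symB:
  fixes M :: "real ^'n ^'n"
  assumes "transpose M = M"
  shows "(M *v x) \<bullet> y = (M *v y) \<bullet> x"
proof -
  have "(M *v x) \<bullet> y = (x v* transpose M) \<bullet> y" by simp
  also have "\<dots> = x \<bullet> (transpose M *v y)" by (rule dot_lmul_matrix)
  also have "\<dots> = (M *v y) \<bullet> x" using assms by (simp add: inner_commute)
  finally show ?thesis .
qed

lemma psdB:
  fixes M :: "real ^'n ^'n"
  assumes "sym_pos_def_mat M"
  shows "(M *v x) \<bullet> x \<ge> 0"
  using assms unfolding sym_pos_def_mat_def
  by (cases "x = 0") (auto intro: less_imp_le)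

lemma expandB:
  fixes M :: "real ^'n ^'n"
  assumes "transpose M = M"
  shows "(M *v (x + t *\<^sub>R y)) \<bullet> (x + t *\<^sub>R y)
     = (M *v x) \<bullet> x + 2 * t * ((M *v x) \<bullet> y) + t^2 * ((M *v y) \<bullet> y)"
  using symB[OF assms, of y x]
  by (simp add: matrix_vector_right_distrib matrix_vector_mult_scaleR inner_add_left
      inner_add_right power2_eq_square algebra_simps)

lemma csB:
  fixes M :: "real ^'n ^'n"
  assumes "sym_pos_def_mat M"
  shows "((M *v x) \<bullet> y)^2 \<le> ((M *v x) \<bullet> x) * ((M *v y) \<bullet> y)"
proof -
  have T: "transpose M = M" using assms unfolding sym_pos_def_mat_def by simp
  define p where "p = (M *v x) \<bullet> x"
  define q where "q = (M *v y) \<bullet> y"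
  define r where "r = (M *v x) \<bullet> y"
  have Q: "\<And>t. p + 2 * t * r + t^2 * q \<ge> 0"
    using expandB[OF T] psdB[OF assms] unfolding p_def q_def r_def by metis
  have p0: "p \<ge> 0" unfolding p_def by (rule psdB[OF assms])
  have q0: "q \<ge> 0" unfolding q_def by (rule psdB[OF assms])
  show ?thesis
  proof (cases "q = 0")
    case True
    have "r = 0"
    proof (rule ccontr)
      assume "r \<noteq> 0"
      have "p + 2 * (-(p+1)/(2*r)) * r + (-(p+1)/(2*r))^2 * q \<ge> 0" by (rule Q)
      with True \<open>r \<noteq> 0\<close> show False by (simp add: field_simps)
    qed
    then show ?thesis using True unfolding p_def q_def r_def by simp
  next
    case False
    then have qp: "q > 0" using q0 by simp
    have "p + 2 * (-r/q) * r + (-r/q)^2 * q \<ge> 0" by (rule Q)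
    then have "p - r^2/q \<ge> 0" using qp by (simp add: power2_eq_square field_simps)
    then have "r^2 \<le> p * q" using qp by (simp add: field_simps)
    then show ?thesis unfolding p_def q_def r_def by simp
  qed
qed

lemma normM_tri:
  fixes M :: "real ^'n ^'n"
  assumes "sym_pos_def_mat M"
  shows "normM M (x + y) \<le> normM M x + normM M y"
proof -
  have T: "transpose M = M" using assms unfolding sym_pos_def_mat_def by simp
  define p where "p = (M *v x) \<bullet> x"
  define q where "q = (M *v y) \<bullet> y"
  define r where "r = (M *v x) \<bullet> y"
  have p0: "p \<ge> 0" unfolding p_def by (rule psdB[OF assms])
  have q0: "q \<ge> 0" unfolding q_def by (rule psdB[OF assms])
  have e: "(M *v (x + y)) \<bullet> (x + y) = p + 2 * r + q"
    using expandB[OF T, of x 1 y] unfolding p_def q_def r_def by simp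
  have cs: "r^2 \<le> p * q" unfolding p_def q_def r_def by (rule csB[OF assms])
  have "r \<le> sqrt (p * q)" using cs real_le_rsqrt by blast
  also have "\<dots> = sqrt p * sqrt q" by (simp add: real_sqrt_mult)
  finally have rl: "r \<le> sqrt p * sqrt q" .
  have "p + 2 * r + q \<le> (sqrt p + sqrt q)^2"
    using rl p0 q0 by (simp add: power2_eq_square algebra_simps)
  then have "sqrt (p + 2 * r + q) \<le> sqrt p + sqrt q"
    using p0 q0 by (metis add_nonneg_nonneg real_le_lsqrt real_sqrt_ge_zero)
  then show ?thesis unfolding normM_def e p_def q_def by simp
qed

lemma normM_scale:
  fixes M :: "real ^'n ^'n"
  shows "normM M (c *\<^sub>R x) = \<bar>c\<bar> * normM M x"
proof -
  have "(M *v (c *\<^sub>R x)) \<bullet> (c *\<^sub>R x) = c^2 * ((M *v x) \<bullet> x)"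
    by (simp add: matrix_vector_mult_scaleR power2_eq_square)
  then show ?thesis unfolding normM_def by (simp add: real_sqrt_mult)
qed

theorem lemmaA2:
  fixes M :: "real ^'n ^'n" and \<eta> :: real and a :: "nat \<Rightarrow> real"
    and z :: "nat \<Rightarrow> real ^'n" and zs :: "real ^'n" and W :: real
  assumes "sym_pos_def_mat M"
    and "\<eta> > 0"
    and "\<forall>k\<ge>1. a k \<ge> 0"
    and "z 1 = z 0"
    and "bdd_above ((\<lambda>k. normM M (\<eta> *\<^sub>R (z k - zs) + a k *\<^sub>R (z k - z (k - 1)))) ` {1..})"
    and "W = (SUP k\<in>{1..}. normM M (\<eta> *\<^sub>R (z k - zs) + a k *\<^sub>R (z k - z (k - 1))))"
  shows "\<forall>k\<ge>1. normM M (z k - zs) \<le> W / \<eta> \<and> a k * normM M (z k - z (k - 1)) \<le> 2 * W"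
proof -
  define w where "w k = \<eta> *\<^sub>R (z k - zs) + a k *\<^sub>R (z k - z (k - 1))" for k
  have wW: "normM M (w k) \<le> W" if "k \<ge> 1" for k
    unfolding assms(6) w_def using assms(5) that by (intro cSUP_upper) auto
  have e: "normM M (z (Suc m) - zs) \<le> W / \<eta>" for m
  proof (induction m)
    case 0
    have "w 1 = \<eta> *\<^sub>R (z 1 - zs)" unfolding w_def using assms(4) by simp
    then have "\<eta> * normM M (z 1 - zs) \<le> W" using wW[of 1] normM_scale[of M \<eta>] assms(2) by simp
    then show ?case using assms(2) by (simp add: field_simps)
  next
    case (Suc m)
    define A where "A = a (Suc (Suc m))"
    have A0: "A \<ge> 0" unfolding A_def using assms(3) by simp
    have eq: "(\<eta> + A) *\<^sub>R (z (Suc (Suc m)) - zs) = w (Suc (Suc m)) + A *\<^sub>R (z (Suc m) - zs)"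
      unfolding w_def A_def by (simp add: algebra_simps)
    have "(\<eta> + A) * normM M (z (Suc (Suc m)) - zs)
        = normM M (w (Suc (Suc m)) + A *\<^sub>R (z (Suc m) - zs))"
      using normM_scale[of M "\<eta> + A"] eq A0 assms(2) by (metis abs_of_nonneg add_nonneg_nonneg less_imp_le)
    also have "\<dots> \<le> normM M (w (Suc (Suc m))) + A * normM M (z (Suc m) - zs)"
      using normM_tri[OF assms(1)] normM_scale A0 by (metis abs_of_nonneg)
    also have "\<dots> \<le> W + A * (W / \<eta>)"
      using wW[of "Suc (Suc m)"] mult_left_mono[OF Suc.IH A0] by linarith
    also have "\<dots> = (\<eta> + A) * (W / \<eta>)" using assms(2) by (simp add: field_simps)
    finally show ?case using assms(2) A0
      by (metis add_pos_nonneg mult_le_cancel_left_pos)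
  qed
  show ?thesis
  proof (intro allI impI conjI)
    fix k :: nat assume k: "k \<ge> 1"
    then obtain m where m: "k = Suc m" by (cases k) auto
    show ek: "normM M (z k - zs) \<le> W / \<eta>" using e m by simp
    have eq: "a k *\<^sub>R (z k - z (k - 1)) = w k + (- \<eta>) *\<^sub>R (z k - zs)"
      unfolding w_def by simp
    have "a k * normM M (z k - z (k - 1)) = normM M (a k *\<^sub>R (z k - z (k - 1)))"
      using normM_scale assms(3) k by (metis abs_of_nonneg)
    also have "\<dots> \<le> normM M (w k) + \<eta> * normM M (z k - zs)"
      unfolding eq using normM_tri[OF assms(1)] normM_scale assms(2) by (metis abs_minus abs_of_pos)
    also have "\<dots> \<le> W + W"
      using wW[OF k] ek assms(2) by (simp add: field_simps)
    finally show "a k * normM M (z k - z (k - 1)) \<le> 2 * W" by simp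
  qed
qed

end
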